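(* For a set of reals $X$: (1) $X$ satisfies $\mathrm{Split}(C_\Omega,C_\Lambda)$ if and only if no image $f[X]$ of $X$ under a continuous function $f:X\to[\mathbb N]^\infty$ is a base for a nonprincipal ultrafilter on $\mathbb N$. (2) $X$ satisfies $\mathrm{Split}(B_\Omega,B_\Lambda)$ if and only if no image $f[X]$ of $X$ under a Borel function $f:X\to[\mathbb N]^\infty$ is a base for a nonprincipal ultrafilter on $\mathbb N$. (3) $X$ satisfies $\mathrm{Split}(C_{\mathrm T},C_{\mathrm T})$ if and only if no image of $X$ under a continuous function $f:X\to[\mathbb N]^\infty$ is a simple $P$-point base. (4) $X$ satisfies $\mathrm{Split}(B_{\mathrm T},B_{\mathrm T})$ if and only if no image of $X$ under a Borel function $f:X\to[\mathbb N]^\infty$ is a simple $P$-point base.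
   Context: A set of reals is an infinite topological space homeomorphic to a subset of $\mathbb R$. A cover of a space $X$ is a family $\mathcal U$ of subsets of $X$ with $\bigcup\mathcal U=X$ such that $X\not\subseteq U$ for every $U\in\mathcal U$. A cover $\mathcal U$ is: a large cover if every $x\in X$ lies in infinitely many members; an $\omega$-cover if every finite subset of $X$ is contained in some member; a $\tau$-cover if it is a large cover and for all $x,y\in X$ at least one of $\{U\in\mathcal U: x\in U, y\notin U\}$, $\{U\in\mathcal U: y\in U, x\notin U\}$ is finite. $B_\Lambda,B_\Omega,B_{\mathrm T}$ denote the collections of countable large covers, $\omega$-covers, $\tau$-covers of $X$ by Borel sets, and $C_\Lambda,C_\Omega,C_{\mathrm T}$ the corresponding collections of countable covers by clopen sets. For collections $\mathfrak U,\mathfrak V$ of covers, $X$ satisfies $\mathrm{Split}(\mathfrak U,\mathfrak V)$ if every $\mathcal U\in\mathfrak U$ can be partitioned into two disjoint subfamilies each of which contains a subfamily belonging to $\mathfrak V$. $[\mathbb N]^\infty$ is the set of infinite subsets of $\mathbb N$, a subspace of $P(\mathbb N)$ identified with the Cantor space $\{0,1\}^{\mathbb N}$ via characteristic functions. For $a,b\subseteq\mathbb N$, $a\subseteq^* b$ means $a\setminus b$ is finite. A family $B\subseteq[\mathbb N]^\infty$ is a base for a nonprincipal ultrafilter $U$ on $\mathbb N$ if $U=\{a\in[\mathbb N]^\infty:\exists b\in B\ (b\subseteq^* a)\}$. A simple $P$-point base is a family $B\subseteq[\mathbb N]^\infty$ which is a base for some nonprincipal ultrafilter on $\mathbb N$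 and is linearly ordered by $\subseteq^*$. *)

theory Defs
  imports "HOL-Analysis.Analysis" "HOL-Probability.Probability"
begin

definition is_cover :: "'a set \<Rightarrow> 'a set set \<Rightarrow> bool" where
  "is_cover X \<U> \<longleftrightarrow> (\<forall>U\<in>\<U>. U \<subseteq> X) \<and> \<Union>\<U> = X \<and> (\<forall>U\<in>\<U>. \<not> X \<subseteq> U)"

definition large_cover :: "'a set \<Rightarrow> 'a set set \<Rightarrow> bool" where
  "large_cover X \<U> \<longleftrightarrow> is_cover X \<U> \<and> (\<forall>x\<in>X. infinite {U\<in>\<U>. x \<in> U})"

definition omega_cover :: "'a set \<Rightarrow> 'a set set \<Rightarrow> bool" where
  "omega_cover X \<U> \<longleftrightarrow> is_cover X \<U> \<and> (\<forall>F. finite F \<and> F \<subseteq> X \<longrightarrow> (\<exists>U\<in>\<U>. F \<subseteq> U))"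

definition tau_cover :: "'a set \<Rightarrow> 'a set set \<Rightarrow> bool" where
  "tau_cover X \<U> \<longleftrightarrow> large_cover X \<U> \<and>
     (\<forall>x\<in>X. \<forall>y\<in>X. finite {U\<in>\<U>. x \<in> U \<and> y \<notin> U} \<or> finite {U\<in>\<U>. y \<in> U \<and> x \<notin> U})"

definition clopen_in :: "real set \<Rightarrow> real set \<Rightarrow> bool" where
  "clopen_in X U \<longleftrightarrow> openin (top_of_set X) U \<and> closedin (top_of_set X) U"

definition borel_in :: "real set \<Rightarrow> real set \<Rightarrow> bool" where
  "borel_in X U \<longleftrightarrow> U \<in> sets (restrict_space borel X)"

definition C_Lambda :: "real set \<Rightarrow> real set set set" where
  "C_Lambda X = {\<U>. countable \<U> \<and> large_cover X \<U> \<and> (\<forall>U\<in>\<U>. clopen_in X U)}"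
definition C_Omega :: "real set \<Rightarrow> real set set set" where
  "C_Omega X = {\<U>. countable \<U> \<and> omega_cover X \<U> \<and> (\<forall>U\<in>\<U>. clopen_in X U)}"
definition C_Tau :: "real set \<Rightarrow> real set set set" where
  "C_Tau X = {\<U>. countable \<U> \<and> tau_cover X \<U> \<and> (\<forall>U\<in>\<U>. clopen_in X U)}"
definition B_Lambda :: "real set \<Rightarrow> real set set set" where
  "B_Lambda X = {\<U>. countable \<U> \<and> large_cover X \<U> \<and> (\<forall>U\<in>\<U>. borel_in X U)}"
definition B_Omega :: "real set \<Rightarrow> real set set set" where
  "B_Omega X = {\<U>. countable \<U> \<and> omega_cover X \<U> \<and> (\<forall>U\<in>\<U>. borel_in X U)}"
definition B_Tau :: "real set \<Rightarrow> real set set set" where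
  "B_Tau X = {\<U>. countable \<U> \<and> tau_cover X \<U> \<and> (\<forall>U\<in>\<U>. borel_in X U)}"

definition Split :: "'a set set set \<Rightarrow> 'a set set set \<Rightarrow> bool" where
  "Split \<UU> \<VV> \<longleftrightarrow> (\<forall>\<U>\<in>\<UU>. \<exists>\<V>1 \<V>2. \<V>1 \<union> \<V>2 = \<U> \<and> \<V>1 \<inter> \<V>2 = {} \<and>
      (\<exists>\<W>\<subseteq>\<V>1. \<W> \<in> \<VV>) \<and> (\<exists>\<W>\<subseteq>\<V>2. \<W> \<in> \<VV>))"

definition almost_subset :: "nat set \<Rightarrow> nat set \<Rightarrow> bool" (infix "\<subseteq>\<^sup>*" 50) where
  "a \<subseteq>\<^sup>* b \<longleftrightarrow> finite (a - b)"

definition nonprincipal_ultrafilter :: "nat set set \<Rightarrow> bool" where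
  "nonprincipal_ultrafilter U \<longleftrightarrow>
     UNIV \<in> U \<and> {} \<notin> U \<and>
     (\<forall>a b. a \<in> U \<and> a \<subseteq> b \<longrightarrow> b \<in> U) \<and>
     (\<forall>a b. a \<in> U \<and> b \<in> U \<longrightarrow> a \<inter> b \<in> U) \<and>
     (\<forall>a. a \<in> U \<or> - a \<in> U) \<and>
     (\<forall>n. {n} \<notin> U)"

definition ultrafilter_base :: "nat set set \<Rightarrow> bool" where
  "ultrafilter_base B \<longleftrightarrow> (\<forall>b\<in>B. infinite b) \<and>
     (\<exists>U. nonprincipal_ultrafilter U \<and> U = {a. infinite a \<and> (\<exists>b\<in>B. b \<subseteq>\<^sup>* a)})"

definition simple_P_point_base :: "nat set set \<Rightarrow> bool" where
  "simple_P_point_base B \<longleftrightarrow> ultrafilter_base B \<and> (\<forall>a\<in>B. \<forall>b\<in>B. a \<subseteq>\<^sup>* b \<or> b \<subseteq>\<^sup>* a)"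

section \<open>Maps into [N]^infinity, viewed inside the Cantor space {0,1}^N via characteristic functions\<close>

definition continuous_to_inf :: "real set \<Rightarrow> (real \<Rightarrow> nat set) \<Rightarrow> bool" where
  "continuous_to_inf X f \<longleftrightarrow> (\<forall>x\<in>X. infinite (f x)) \<and>
     continuous_map (top_of_set X) (product_topology (\<lambda>_::nat. discrete_topology (UNIV::bool set)) UNIV)
       (\<lambda>x n. n \<in> f x)"

definition borel_to_inf :: "real set \<Rightarrow> (real \<Rightarrow> nat set) \<Rightarrow> bool" where
  "borel_to_inf X f \<longleftrightarrow> (\<forall>x\<in>X. infinite (f x)) \<and>
     (\<lambda>x n. n \<in> f x) \<in> measurable (restrict_space borel X) (Pi\<^sub>M (UNIV::nat set) (\<lambda>_. count_space (UNIV::bool set)))"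

end

theory Submission
  imports Defs
begin


lemma cont_clopen:
  assumes "continuous_to_inf X f"
  shows "clopen_in X {x\<in>X. n \<in> f x}"
proof -
  have c: "continuous_map (top_of_set X) (product_topology (\<lambda>_::nat. discrete_topology (UNIV::bool set)) UNIV) (\<lambda>x n. n \<in> f x)"
    using assms unfolding continuous_to_inf_def by blast
  have c2: "continuous_map (top_of_set X) (discrete_topology (UNIV::bool set)) (\<lambda>x. n \<in> f x)"
    using c unfolding continuous_map_componentwise_UNIV by blast
  have "openin (top_of_set X) {x \<in> topspace (top_of_set X). (n \<in> f x) \<in> {True}}"
    by (rule openin_continuous_map_preimage[OF c2]) simp
  moreover have "closedin (top_of_set X) {x \<in> topspace (top_of_set X). (n \<in> f x) \<in> {True}}"
    by (rule closedin_continuous_map_preimage[OF c2]) simp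
  ultimately show ?thesis unfolding clopen_in_def by simp
qed

lemma bool_mem_iff: "((b::bool) \<in> S) \<longleftrightarrow> (b \<and> True \<in> S) \<or> (\<not> b \<and> False \<in> S)"
  by (cases b) auto

lemma clopen_cont:
  assumes "\<And>n. clopen_in X (e n)" "\<And>n. e n \<subseteq> X"
  shows "continuous_map (top_of_set X) (product_topology (\<lambda>_::nat. discrete_topology (UNIV::bool set)) UNIV)
       (\<lambda>x n. n \<in> {m. x \<in> e m})"
  unfolding continuous_map_componentwise_UNIV
proof
  fix n
  have o: "openin (top_of_set X) (e n)" and cl: "closedin (top_of_set X) (e n)"
    using assms(1) unfolding clopen_in_def by auto
  have o2: "openin (top_of_set X) (X - e n)" using cl unfolding closedin_def by simp
  show "continuous_map (top_of_set X) (discrete_topology UNIV) (\<lambda>x. n \<in> {m. x \<in> e m})"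
  proof -
    have "openin (top_of_set X) {x \<in> topspace (top_of_set X). (x \<in> e n) \<in> S}" for S :: "bool set"
    proof -
      have "{x \<in> topspace (top_of_set X). (x \<in> e n) \<in> S} =
        (if True \<in> S then (if False \<in> S then X else e n) else (if False \<in> S then X - e n else {}))"
        using assms(2)[of n] apply (cases "True \<in> S"; cases "False \<in> S")
           apply (auto)
        by (metis (full_types))+
      then show ?thesis using o o2 by auto
    qed
    then show ?thesis unfolding continuous_map_def by simp
  qed
qed

lemma borel_sets:
  assumes "borel_to_inf X f"
  shows "borel_in X {x\<in>X. n \<in> f x}"
proof -
  have m: "(\<lambda>x n. n \<in> f x) \<in> measurable (restrict_space borel X) (Pi\<^sub>M (UNIV::nat set) (\<lambda>_. count_space (UNIV::bool set)))"
    using assms unfolding borel_to_inf_def by blast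
  have m2: "(\<lambda>x. n \<in> f x) \<in> measurable (restrict_space borel X) (count_space (UNIV::bool set))"
    using measurable_comp[OF m measurable_component_singleton[of n UNIV "\<lambda>_. count_space (UNIV::bool set)"]]
    by (simp add: o_def)
  have "(\<lambda>x. n \<in> f x) -` {True} \<inter> space (restrict_space borel X) \<in> sets (restrict_space borel X)"
    by (rule measurable_sets[OF m2]) simp
  moreover have "(\<lambda>x. n \<in> f x) -` {True} \<inter> space (restrict_space borel X) = {x\<in>X. n \<in> f x}"
    by (auto simp: space_restrict_space)
  ultimately show ?thesis unfolding borel_in_def by simp
qed

lemma sets_borel_meas:
  assumes "\<And>n. borel_in X (e n)" "\<And>n. e n \<subseteq> X"
  shows "(\<lambda>x n. n \<in> {m. x \<in> e m}) \<in> measurable (restrict_space borel X) (Pi\<^sub>M (UNIV::nat set) (\<lambda>_. count_space (UNIV::bool set)))"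
proof -
  have "(\<lambda>x n. x \<in> e n) \<in> measurable (restrict_space borel X) (Pi\<^sub>M (UNIV::nat set) (\<lambda>_. count_space (UNIV::bool set)))"
  proof (rule measurable_PiM_single'[where f="\<lambda>n x. x \<in> e n"])
    fix n :: nat
    have s: "e n \<in> sets (restrict_space borel X)" using assms(1) unfolding borel_in_def by blast
    have sX: "X \<in> sets (restrict_space borel X)"
      using sets.top[of "restrict_space borel X"] by (simp add: space_restrict_space)
    have sD: "X - e n \<in> sets (restrict_space borel X)" using s sX by blast
    show "(\<lambda>x. x \<in> e n) \<in> measurable (restrict_space borel X) (count_space UNIV)"
      unfolding measurable_count_space_eq2_countable
    proof (intro conjI ballI)
      fix a :: bool
      have "(\<lambda>x. x \<in> e n) -` {a} \<inter> space (restrict_space borel X) = (if a then e n else X - e n)"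
        using assms(2)[of n] by (auto simp: space_restrict_space)
      then show "(\<lambda>x. x \<in> e n) -` {a} \<inter> space (restrict_space borel X) \<in> sets (restrict_space borel X)"
        using s sD by simp
    qed auto
  qed (auto simp: space_PiM)
  then show ?thesis by simp
qed



lemma omega_inf:
  assumes cov: "is_cover X U" and om: "\<And>F. finite F \<Longrightarrow> F \<subseteq> X \<Longrightarrow> \<exists>W\<in>U. F \<subseteq> W"
    and F: "finite F" "F \<subseteq> X"
  shows "infinite {W\<in>U. F \<subseteq> W}"
proof
  assume fin: "finite {W\<in>U. F \<subseteq> W}"
  let ?S = "{W\<in>U. F \<subseteq> W}"
  have "\<forall>W\<in>?S. \<exists>y. y \<in> X \<and> y \<notin> W" using cov unfolding is_cover_def by blast
  then obtain g where g: "\<forall>W\<in>?S. g W \<in> X \<and> g W \<notin> W" by metis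
  let ?F = "F \<union> g ` ?S"
  have "finite ?F" using fin F by simp
  moreover have "?F \<subseteq> X" using g F by auto
  ultimately obtain W where W: "W\<in>U" "?F \<subseteq> W" using om by blast
  then have "W \<in> ?S" by auto
  then show False using g W by auto
qed

lemma tau_min:
  assumes tau: "tau_cover X U" and F: "finite F" "F \<noteq> {}" "F \<subseteq> X"
  shows "\<exists>y\<in>F. \<forall>x\<in>F. finite {W\<in>U. y \<in> W \<and> x \<notin> W}"
  using F
proof (induction F rule: finite_ne_induct)
  case (singleton a)
  then show ?case by auto
next
  case (insert a F)
  then obtain y where y: "y \<in> F" "\<forall>x\<in>F. finite {W\<in>U. y \<in> W \<and> x \<notin> W}" by auto
  show ?case
  proof (cases "finite {W\<in>U. y \<in> W \<and> a \<notin> W}")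
    case True
    then show ?thesis using y by (intro bexI[of _ y]) auto
  next
    case False
    have "y \<in> X" "a \<in> X" using y insert by auto
    then have fa: "finite {W\<in>U. a \<in> W \<and> y \<notin> W}" using False tau unfolding tau_cover_def by blast
    have "finite {W\<in>U. a \<in> W \<and> x \<notin> W}" if "x \<in> insert a F" for x
    proof (cases "x = a")
      case True then show ?thesis by simp
    next
      case False
      then have "x \<in> F" using that by auto
      then have "finite ({W\<in>U. a \<in> W \<and> y \<notin> W} \<union> {W\<in>U. y \<in> W \<and> x \<notin> W})" using fa y by auto
      then show ?thesis by (rule finite_subset[rotated]) auto
    qed
    then show ?thesis by blast
  qed
qed

lemma tau_large: "tau_cover X U \<Longrightarrow> x \<in> X \<Longrightarrow> infinite {W\<in>U. x \<in> W}"
  unfolding tau_cover_def large_cover_def by simp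

lemma tau_omega:
  assumes tau: "tau_cover X U" and X: "X \<noteq> {}" and F: "finite F" "F \<subseteq> X"
  shows "\<exists>W\<in>U. F \<subseteq> W"
proof (cases "F = {}")
  case True
  obtain x where x: "x \<in> X" using X by blast
  have "infinite {W\<in>U. x \<in> W}" using tau_large[OF tau x] .
  then have "{W\<in>U. x \<in> W} \<noteq> {}" by (metis finite.emptyI)
  then obtain W where "W \<in> U" by blast
  then show ?thesis using True by blast
next
  case False
  from tau_min[OF tau F(1) False F(2)] obtain y where y1: "y \<in> F"
    and y2: "\<forall>x\<in>F. finite {W\<in>U. y \<in> W \<and> x \<notin> W}" by (elim bexE)
  have yX: "y \<in> X" using y1 F(2) by (rule subsetD[rotated])
  have inf: "infinite {W\<in>U. y \<in> W}" by (rule tau_large[OF tau yX])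
  have fin: "finite (\<Union>x\<in>F. {W\<in>U. y \<in> W \<and> x \<notin> W})"
    by (rule finite_UN_I[OF F(1)]) (use y2 in simp)
  define S where "S = {W\<in>U. y \<in> W} - (\<Union>x\<in>F. {W\<in>U. y \<in> W \<and> x \<notin> W})"
  have "infinite S" unfolding S_def by (rule Diff_infinite_finite[OF fin inf])
  then have "S \<noteq> {}" by (metis finite.emptyI)
  then obtain W where W: "W \<in> S" by blast
  then have "W \<in> U" "F \<subseteq> W" unfolding S_def by auto
  then show ?thesis by blast
qed

lemma large_of:
  assumes VU: "V \<subseteq> U" and cov: "is_cover X U" and inf: "\<forall>x\<in>X. infinite {W\<in>V. x \<in> W}"
  shows "large_cover X V"
proof -
  have a: "\<forall>W\<in>U. W \<subseteq> X" "\<forall>W\<in>U. \<not> X \<subseteq> W" using cov unfolding is_cover_def by simp_all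
  have b: "\<forall>W\<in>V. W \<subseteq> X" "\<forall>W\<in>V. \<not> X \<subseteq> W" using a VU by blast+
  have "X \<subseteq> \<Union> V"
  proof
    fix x assume "x \<in> X"
    then have "infinite {W\<in>V. x \<in> W}" using inf by blast
    then have "{W\<in>V. x \<in> W} \<noteq> {}" by (metis finite.emptyI)
    then obtain W where "W \<in> V" "x \<in> W" by blast
    then show "x \<in> \<Union> V" by blast
  qed
  moreover have "\<Union> V \<subseteq> X" using b by blast
  ultimately have "\<Union> V = X" by (rule equalityI[rotated])
  then show ?thesis unfolding large_cover_def is_cover_def using b inf by simp
qed

lemma tau_sub:
  assumes tau: "tau_cover X U" and VU: "V \<subseteq> U" and lg: "large_cover X V"
  shows "tau_cover X V"
proof -
  have T: "\<forall>x\<in>X. \<forall>y\<in>X. finite {W\<in>U. x \<in> W \<and> y \<notin> W} \<or> finite {W\<in>U. y \<in> W \<and> x \<notin> W}"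
    using tau unfolding tau_cover_def by (rule conjunct2)
  have "\<forall>x\<in>X. \<forall>y\<in>X. finite {W\<in>V. x \<in> W \<and> y \<notin> W} \<or> finite {W\<in>V. y \<in> W \<and> x \<notin> W}"
  proof (intro ballI)
    fix x y assume xy: "x \<in> X" "y \<in> X"
    have s1: "{W\<in>V. x \<in> W \<and> y \<notin> W} \<subseteq> {W\<in>U. x \<in> W \<and> y \<notin> W}" using VU by blast
    have s2: "{W\<in>V. y \<in> W \<and> x \<notin> W} \<subseteq> {W\<in>U. y \<in> W \<and> x \<notin> W}" using VU by blast
    from T xy have "finite {W\<in>U. x \<in> W \<and> y \<notin> W} \<or> finite {W\<in>U. y \<in> W \<and> x \<notin> W}" by blast
    then show "finite {W\<in>V. x \<in> W \<and> y \<notin> W} \<or> finite {W\<in>V. y \<in> W \<and> x \<notin> W}"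
    proof
      assume "finite {W\<in>U. x \<in> W \<and> y \<notin> W}"
      then show ?thesis using finite_subset[OF s1] by blast
    next
      assume "finite {W\<in>U. y \<in> W \<and> x \<notin> W}"
      then show ?thesis using finite_subset[OF s2] by blast
    qed
  qed
  then show ?thesis unfolding tau_cover_def using lg by (rule conjI[rotated])
qed



lemma bij_cnt:
  assumes bij: "bij_betw e (UNIV::nat set) U"
  shows "finite {n. P (e n)} \<longleftrightarrow> finite {W\<in>U. P W}"
proof -
  have inj: "inj e" and im: "e ` UNIV = U" using bij by (auto simp: bij_betw_def)
  have "{W\<in>U. P W} = e ` {n. P (e n)}" using im by auto
  then show ?thesis using inj by (simp add: finite_image_iff inj_on_subset)
qed

lemma nonsplit_base:
  fixes X :: "'a set" and U and e :: "nat \<Rightarrow> 'a set"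
  assumes X: "X \<noteq> {}" and bij: "bij_betw e UNIV U" and cov: "is_cover X U"
    and om: "\<And>F. finite F \<Longrightarrow> F \<subseteq> X \<Longrightarrow> infinite {W\<in>U. F \<subseteq> W}"
    and ns: "\<And>V1. V1 \<subseteq> U \<Longrightarrow> large_cover X V1 \<Longrightarrow> large_cover X (U - V1) \<Longrightarrow> False"
  shows "ultrafilter_base ((\<lambda>x. {n. x \<in> e n}) ` X)" "\<forall>x\<in>X. infinite {n. x \<in> e n}"
proof -
  define f where "f = (\<lambda>x. {n. x \<in> e n})"
  have inj: "inj e" and im: "e ` UNIV = U" using bij by (auto simp: bij_betw_def)
  have finf: "infinite {n. F \<subseteq> e n}" if "finite F" "F \<subseteq> X" for F
    using om[OF that] bij_cnt[OF bij, of "\<lambda>W. F \<subseteq> W"] by simp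
  have fx: "infinite (f x)" if "x \<in> X" for x
    using finf[of "{x}"] that unfolding f_def by simp
  then show "\<forall>x\<in>X. infinite {n. x \<in> e n}" unfolding f_def by blast
  have key: "(\<exists>z\<in>X. finite (f z \<inter> A)) \<or> (\<exists>z\<in>X. finite (f z - A))" for A
  proof (rule ccontr)
    assume neg: "\<not> ?thesis"
    have sub: "e ` A \<subseteq> U" using im by auto
    have cmp: "U - e ` A = e ` (- A)" using inj im by (metis Compl_eq_Diff_UNIV image_set_diff)
    have l1: "large_cover X (e ` A)"
    proof (rule large_of[OF sub cov], intro ballI)
      fix x assume "x \<in> X"
      then have "infinite (f x \<inter> A)" using neg by blast
      moreover have "{W\<in>e ` A. x \<in> W} = e ` (f x \<inter> A)" unfolding f_def by auto
      ultimately show "infinite {W\<in>e ` A. x \<in> W}"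
        using inj by (simp add: finite_image_iff inj_on_subset)
    qed
    have l2: "large_cover X (U - e ` A)"
    proof (rule large_of[OF _ cov], simp, intro ballI)
      fix x assume "x \<in> X"
      then have "infinite (f x - A)" using neg by blast
      moreover have "{W\<in>U - e ` A. x \<in> W} = e ` (f x - A)" unfolding f_def cmp by auto
      ultimately show "infinite {W\<in>U - e ` A. x \<in> W}"
        using inj by (simp add: finite_image_iff inj_on_subset)
    qed
    show False using ns[OF sub l1 l2] .
  qed
  define Ult where "Ult = {a. infinite a \<and> (\<exists>b\<in>f ` X. b \<subseteq>\<^sup>* a)}"
  have mem: "a \<in> Ult \<longleftrightarrow> infinite a \<and> (\<exists>x\<in>X. finite (f x - a))" for a
    unfolding Ult_def almost_subset_def by auto
  have triple: "infinite (f x \<inter> f y \<inter> f z)" if "x \<in> X" "y \<in> X" "z \<in> X" for x y z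
  proof -
    have "f x \<inter> f y \<inter> f z = {n. {x,y,z} \<subseteq> e n}" unfolding f_def by auto
    then show ?thesis using finf[of "{x,y,z}"] that by simp
  qed
  have upd: "a \<in> Ult" if "z \<in> X" "finite (f z - a)" for a z
  proof -
    have "f z \<subseteq> (f z - a) \<union> a" by auto
    then have "infinite a" using fx[OF that(1)] that(2) by (metis finite_Un finite_subset)
    then show ?thesis using mem that by blast
  qed
  have "nonprincipal_ultrafilter Ult"
    unfolding nonprincipal_ultrafilter_def
  proof (intro conjI allI impI)
    obtain x where "x \<in> X" using X by auto
    then show "UNIV \<in> Ult" using upd[of x UNIV] by simp
    show "{} \<notin> Ult" using mem by simp
    show "{n} \<notin> Ult" for n using mem by simp
  next
    fix a b assume "a \<in> Ult \<and> a \<subseteq> b"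
    then show "b \<in> Ult" unfolding mem by (meson Diff_mono finite_subset infinite_super subset_refl)
  next
    fix a b assume ab: "a \<in> Ult \<and> b \<in> Ult"
    then obtain x y where xy: "x \<in> X" "y \<in> X" "finite (f x - a)" "finite (f y - b)" unfolding mem by blast
    from key[of "a \<inter> b"] show "a \<inter> b \<in> Ult"
    proof
      assume "\<exists>z\<in>X. finite (f z \<inter> (a \<inter> b))"
      then obtain z where z: "z \<in> X" "finite (f z \<inter> (a \<inter> b))" by blast
      have "f x \<inter> f y \<inter> f z \<subseteq> (f x - a) \<union> (f y - b) \<union> (f z \<inter> (a \<inter> b))" by auto
      then have "finite (f x \<inter> f y \<inter> f z)" using xy z by (meson finite_Un finite_subset)
      then show ?thesis using triple[OF xy(1,2) z(1)] by blast
    next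
      assume "\<exists>z\<in>X. finite (f z - (a \<inter> b))"
      then show ?thesis using upd by blast
    qed
  next
    fix a
    from key[of a] show "a \<in> Ult \<or> - a \<in> Ult"
    proof
      assume "\<exists>z\<in>X. finite (f z \<inter> a)"
      then obtain z where "z \<in> X" "finite (f z \<inter> a)" by blast
      moreover have "f z - (- a) = f z \<inter> a" by auto
      ultimately show ?thesis using upd[of z "- a"] by auto
    next
      assume "\<exists>z\<in>X. finite (f z - a)"
      then show ?thesis using upd by blast
    qed
  qed
  then show "ultrafilter_base ((\<lambda>x. {n. x \<in> e n}) ` X)"
    unfolding ultrafilter_base_def Ult_def f_def using fx[unfolded f_def] by blast
qed

lemma tau_linear:
  assumes bij: "bij_betw e (UNIV::nat set) U" and tau: "tau_cover X U" and xy: "x \<in> X" "y \<in> X"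
  shows "{n. x \<in> e n} \<subseteq>\<^sup>* {n. y \<in> e n} \<or> {n. y \<in> e n} \<subseteq>\<^sup>* {n. x \<in> e n}"
proof -
  have "finite {W\<in>U. x \<in> W \<and> y \<notin> W} \<or> finite {W\<in>U. y \<in> W \<and> x \<notin> W}"
    using tau xy unfolding tau_cover_def by blast
  then show ?thesis unfolding almost_subset_def
    using bij_cnt[OF bij, of "\<lambda>W. x \<in> W \<and> y \<notin> W"] bij_cnt[OF bij, of "\<lambda>W. y \<in> W \<and> x \<notin> W"]
    by (simp add: set_diff_eq)
qed



lemma infinite_split_nat:
  fixes I :: "nat set"
  assumes "infinite I"
  shows "\<exists>J\<subseteq>I. infinite J \<and> infinite (I - J)"
proof -
  have bij: "bij_betw (from_nat_into I) UNIV I" using bij_betw_from_nat_into[OF _ assms] by simp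
  then have inj: "inj (from_nat_into I)" and im: "from_nat_into I ` UNIV = I" by (auto simp: bij_betw_def)
  define J where "J = from_nat_into I ` {n. even n}"
  have ev: "infinite {n::nat. even n}"
    unfolding infinite_nat_iff_unbounded_le
  proof
    fix m :: nat show "\<exists>n\<ge>m. n \<in> {n. even n}" by (rule exI[of _ "2*m"]) auto
  qed
  have od: "infinite {n::nat. odd n}"
  proof -
    have "{n::nat. odd n} = Suc ` {n. even n}" by (auto simp: image_iff) presburger
    then show ?thesis using ev by (simp add: finite_image_iff)
  qed
  have "I - J = from_nat_into I ` {n. odd n}" unfolding J_def using inj im
    by (metis Compl_eq_Diff_UNIV Collect_neg_eq image_set_diff)
  then have "infinite J \<and> infinite (I - J)" unfolding J_def using ev od inj
    by (simp add: finite_image_iff inj_on_subset)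
  moreover have "J \<subseteq> I" unfolding J_def using im by auto
  ultimately show ?thesis by blast
qed

lemma base_cover:
  fixes X :: "'a set" and f :: "'a \<Rightarrow> nat set" and Uc V
  assumes finf: "\<forall>x\<in>X. infinite (f x)" and base: "ultrafilter_base (f ` X)"
  assumes Uc_def: "Uc = (\<lambda>n. {x\<in>X. n \<in> f x})"
  assumes V_def: "V = Uc ` {n. Uc n \<noteq> X}"
  shows "is_cover X V" "\<And>F. finite F \<Longrightarrow> F \<subseteq> X \<Longrightarrow> \<exists>W\<in>V. F \<subseteq> W" "countable V"
    "\<And>V1 W1 W2. V1 \<subseteq> V \<Longrightarrow> W1 \<subseteq> V1 \<Longrightarrow> W2 \<subseteq> V - V1 \<Longrightarrow> large_cover X W1 \<Longrightarrow> large_cover X W2 \<Longrightarrow> False"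
    "(\<forall>a\<in>f ` X. \<forall>b\<in>f ` X. a \<subseteq>\<^sup>* b \<or> b \<subseteq>\<^sup>* a) \<Longrightarrow> x \<in> X \<Longrightarrow> y \<in> X \<Longrightarrow>
       finite {W\<in>V. x \<in> W \<and> y \<notin> W} \<or> finite {W\<in>V. y \<in> W \<and> x \<notin> W}"
proof -
  obtain Ult where nu: "nonprincipal_ultrafilter Ult" and Ult: "Ult = {a. infinite a \<and> (\<exists>b\<in>f ` X. b \<subseteq>\<^sup>* a)}"
    using base unfolding ultrafilter_base_def by blast
  have mem: "a \<in> Ult \<longleftrightarrow> infinite a \<and> (\<exists>x\<in>X. finite (f x - a))" for a
    unfolding Ult almost_subset_def by auto
  have up: "b \<in> Ult" if "a \<in> Ult" "a \<subseteq> b" for a b using nu that unfolding nonprincipal_ultrafilter_def by blast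
  have int: "a \<inter> b \<in> Ult" if "a \<in> Ult" "b \<in> Ult" for a b using nu that unfolding nonprincipal_ultrafilter_def by blast
  have cmp: "a \<in> Ult \<or> - a \<in> Ult" for a using nu unfolding nonprincipal_ultrafilter_def by blast
  have univ: "UNIV \<in> Ult" using nu unfolding nonprincipal_ultrafilter_def by blast
  have fU: "f x \<in> Ult" if "x \<in> X" for x using finf that by (auto simp: mem intro!: bexI[of _ x])
  have interF: "finite F \<Longrightarrow> F \<subseteq> X \<Longrightarrow> (\<Inter>x\<in>F. f x) \<in> Ult" for F
  proof (induction F rule: finite_induct)
    case empty then show ?case using univ by simp
  next
    case (insert a F) then show ?case using int fU by simp
  qed
  define I where "I = {n. Uc n = X}"
  have Ii: "n \<in> I \<longleftrightarrow> (\<forall>x\<in>X. n \<in> f x)" for n unfolding I_def Uc_def by auto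
  have notI: "I \<notin> Ult"
  proof
    assume IU: "I \<in> Ult"
    then have "infinite I" unfolding mem by (rule conjunct1)
    then obtain J where J: "J \<subseteq> I" "infinite J" "infinite (I - J)" using infinite_split_nat[of I] by blast
    have gen: False if HH: "H \<in> Ult" "infinite (I - H)" for H
    proof -
      obtain z where z: "z \<in> X" "finite (f z - H)" using HH(1) unfolding mem by blast
      have "I - H \<subseteq> f z - H" using Ii z by auto
      then show False using finite_subset[OF _ z(2)] HH(2) by blast
    qed
    from cmp[of J] show False
    proof
      assume "J \<in> Ult" then show False using gen[OF _ J(3)] by blast
    next
      assume nJ: "- J \<in> Ult"
      have e: "I - (- J) = J" using J(1) by blast
      have "infinite (I - (- J))" unfolding e by (rule J(2))
      then show False by (rule gen[OF nJ])
    qed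
  qed
  show om: "\<exists>W\<in>V. F \<subseteq> W" if "finite F" "F \<subseteq> X" for F
  proof -
    have c: "(\<Inter>x\<in>F. f x) \<in> Ult" by (rule interF[OF that])
    have "\<not> (\<Inter>x\<in>F. f x) \<subseteq> I"
    proof
      assume "(\<Inter>x\<in>F. f x) \<subseteq> I"
      then have "I \<in> Ult" by (rule up[OF c])
      with notI show False by blast
    qed
    then obtain n where n: "n \<in> (\<Inter>x\<in>F. f x)" "n \<notin> I" by blast
    then have "Uc n \<in> V" unfolding V_def I_def by auto
    moreover have "F \<subseteq> Uc n" using n that unfolding Uc_def by auto
    ultimately show ?thesis by blast
  qed
  have VX: "W \<subseteq> X" "W \<noteq> X" if "W \<in> V" for W using that unfolding V_def Uc_def by auto
  show cov: "is_cover X V" unfolding is_cover_def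
  proof (intro conjI)
    show "\<forall>U\<in>V. U \<subseteq> X" using VX by blast
    show "\<forall>U\<in>V. \<not> X \<subseteq> U" using VX by blast
    show "\<Union> V = X"
    proof
      show "\<Union> V \<subseteq> X" using VX by blast
      show "X \<subseteq> \<Union> V"
      proof
        fix x assume "x \<in> X"
        then obtain W where "W \<in> V" "{x} \<subseteq> W" using om[of "{x}"] by auto
        then show "x \<in> \<Union> V" by auto
      qed
    qed
  qed
  show "countable V" unfolding V_def by simp
  show False if V1: "V1 \<subseteq> V" "W1 \<subseteq> V1" "W2 \<subseteq> V - V1" "large_cover X W1" "large_cover X W2" for V1 W1 W2
  proof -
    define A where "A = {n. Uc n \<in> V1}"
    have inV: "\<exists>n. W = Uc n" if "W \<in> V" for W using that unfolding V_def by auto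
    from cmp[of A] show False
    proof
      assume "A \<in> Ult"
      then obtain z where z: "z \<in> X" "finite (f z - A)" unfolding mem by blast
      have "infinite {W\<in>W2. z \<in> W}" using V1 z unfolding large_cover_def by blast
      moreover have "{W\<in>W2. z \<in> W} \<subseteq> Uc ` (f z - A)"
      proof
        fix W assume W: "W \<in> {W\<in>W2. z \<in> W}"
        then have "W \<in> V" "W \<notin> V1" using V1 by auto
        then obtain n where n: "W = Uc n" using inV by blast
        then have "n \<in> f z" "n \<notin> A" using W \<open>W \<notin> V1\<close> unfolding Uc_def A_def by auto
        then show "W \<in> Uc ` (f z - A)" using n by auto
      qed
      ultimately show False using z finite_subset by blast
    next
      assume "- A \<in> Ult"
      then obtain z where z: "z \<in> X" "finite (f z - - A)" unfolding mem by blast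
      have "infinite {W\<in>W1. z \<in> W}" using V1 z unfolding large_cover_def by blast
      moreover have "{W\<in>W1. z \<in> W} \<subseteq> Uc ` (f z - - A)"
      proof
        fix W assume W: "W \<in> {W\<in>W1. z \<in> W}"
        then have "W \<in> V" "W \<in> V1" using V1 by auto
        then obtain n where n: "W = Uc n" using inV by blast
        then have "n \<in> f z" "n \<in> A" using W \<open>W \<in> V1\<close> unfolding Uc_def A_def by auto
        then show "W \<in> Uc ` (f z - - A)" using n by auto
      qed
      ultimately show False using z finite_subset by blast
    qed
  qed
  assume lin: "\<forall>a\<in>f ` X. \<forall>b\<in>f ` X. a \<subseteq>\<^sup>* b \<or> b \<subseteq>\<^sup>* a" and xy: "x \<in> X" "y \<in> X"
  have gen: "finite {W\<in>V. x \<in> W \<and> y \<notin> W}" if "finite (f x - f y)" "x \<in> X" "y \<in> X" for x y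
  proof -
    have "{W\<in>V. x \<in> W \<and> y \<notin> W} \<subseteq> Uc ` (f x - f y)"
    proof
      fix W assume W: "W \<in> {W\<in>V. x \<in> W \<and> y \<notin> W}"
      then obtain n where n: "W = Uc n" unfolding V_def by auto
      then have "n \<in> f x - f y" using W that unfolding Uc_def by auto
      then show "W \<in> Uc ` (f x - f y)" using n by auto
    qed
    then show ?thesis using that finite_subset by blast
  qed
  show "finite {W\<in>V. x \<in> W \<and> y \<notin> W} \<or> finite {W\<in>V. y \<in> W \<and> x \<notin> W}"
    using lin xy gen unfolding almost_subset_def by blast
qed



lemma part_gen:
  fixes X :: "'a set" and P :: "'a set \<Rightarrow> bool" and M :: "('a \<Rightarrow> nat set) \<Rightarrow> bool"
    and CU CV :: "'a set set set" and Q :: "nat set set \<Rightarrow> bool"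
  assumes Xinf: "infinite X"
   and h0: "\<And>f. M f \<Longrightarrow> \<forall>x\<in>X. infinite (f x)"
   and h1: "\<And>f n. M f \<Longrightarrow> P {x\<in>X. n \<in> f x}"
   and h2: "\<And>e. (\<And>n. P (e n)) \<Longrightarrow> (\<And>n. e n \<subseteq> X) \<Longrightarrow> \<forall>x\<in>X. infinite {n. x \<in> e n} \<Longrightarrow> M (\<lambda>x. {n. x \<in> e n})"
   and CU_def: "CU = {U. countable U \<and> A U \<and> (\<forall>W\<in>U. P W)}"
   and CV_def: "CV = {U. countable U \<and> B U \<and> (\<forall>W\<in>U. P W)}"
   and fwd: "\<And>V f. Q (f ` X) \<Longrightarrow> \<forall>x\<in>X. infinite (f x) \<Longrightarrow> is_cover X V \<Longrightarrow> (\<And>F. finite F \<Longrightarrow> F \<subseteq> X \<Longrightarrow> \<exists>W\<in>V. F \<subseteq> W)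
        \<Longrightarrow> (\<And>x y. x \<in> X \<Longrightarrow> y \<in> X \<Longrightarrow> (\<forall>a\<in>f ` X. \<forall>b\<in>f ` X. a \<subseteq>\<^sup>* b \<or> b \<subseteq>\<^sup>* a) \<Longrightarrow>
              finite {W\<in>V. x \<in> W \<and> y \<notin> W} \<or> finite {W\<in>V. y \<in> W \<and> x \<notin> W}) \<Longrightarrow> A V"
   and Qb: "\<And>B. Q B \<Longrightarrow> ultrafilter_base B"
   and BL: "\<And>V. B V \<Longrightarrow> large_cover X V"
   and Aom: "\<And>U. A U \<Longrightarrow> is_cover X U \<and> (\<forall>F. finite F \<and> F \<subseteq> X \<longrightarrow> (\<exists>W\<in>U. F \<subseteq> W))"
   and LB: "\<And>U V. A U \<Longrightarrow> V \<subseteq> U \<Longrightarrow> large_cover X V \<Longrightarrow> B V"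
   and bwd: "\<And>U e. A U \<Longrightarrow> bij_betw e UNIV U \<Longrightarrow> ultrafilter_base ((\<lambda>x. {n. x \<in> e n}) ` X) \<Longrightarrow> Q ((\<lambda>x. {n. x \<in> e n}) ` X)"
  shows "Split CU CV \<longleftrightarrow> (\<forall>f. M f \<longrightarrow> \<not> Q (f ` X))"
proof
  assume S: "Split CU CV"
  show "\<forall>f. M f \<longrightarrow> \<not> Q (f ` X)"
  proof (intro allI impI notI)
    fix f assume Mf: "M f" and q: "Q (f ` X)"
    have finf: "\<forall>x\<in>X. infinite (f x)" by (rule h0[OF Mf])
    have b: "ultrafilter_base (f ` X)" by (rule Qb[OF q])
    define Uc where "Uc = (\<lambda>n. {x\<in>X. n \<in> f x})"
    define V where "V = Uc ` {n. Uc n \<noteq> X}"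
    note bc = base_cover[OF finf b Uc_def V_def]
    have "A V"
    proof (rule fwd[OF q finf bc(1)])
      fix F assume "finite F" "F \<subseteq> X" then show "\<exists>W\<in>V. F \<subseteq> W" by (rule bc(2))
    next
      fix x y assume xy: "x \<in> X" "y \<in> X" and lin: "\<forall>a\<in>f ` X. \<forall>b\<in>f ` X. a \<subseteq>\<^sup>* b \<or> b \<subseteq>\<^sup>* a"
      show "finite {W\<in>V. x \<in> W \<and> y \<notin> W} \<or> finite {W\<in>V. y \<in> W \<and> x \<notin> W}"
        by (rule bc(5)[OF lin xy])
    qed
    moreover have "\<forall>W\<in>V. P W" unfolding V_def Uc_def using h1[OF Mf] by blast
    ultimately have "V \<in> CU" unfolding CU_def using bc(3) by blast
    have "\<exists>V1 V2. V1 \<union> V2 = V \<and> V1 \<inter> V2 = {} \<and> (\<exists>W\<subseteq>V1. W \<in> CV) \<and> (\<exists>W\<subseteq>V2. W \<in> CV)"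
      using S \<open>V \<in> CU\<close> unfolding Split_def by (rule bspec)
    then obtain V1 V2 W1 W2 where v: "V1 \<union> V2 = V" "V1 \<inter> V2 = {}" "W1 \<subseteq> V1" "W1 \<in> CV" "W2 \<subseteq> V2" "W2 \<in> CV"
      by blast
    have l1: "large_cover X W1" using v(4) unfolding CV_def by (intro BL) blast
    have l2: "large_cover X W2" using v(6) unfolding CV_def by (intro BL) blast
    have "V1 \<subseteq> V" "W2 \<subseteq> V - V1" using v by blast+
    then show False by (rule bc(4)[OF _ v(3) _ l1 l2])
  qed
next
  assume H: "\<forall>f. M f \<longrightarrow> \<not> Q (f ` X)"
  show "Split CU CV" unfolding Split_def
  proof (rule ballI, rule ccontr)
    fix U assume U: "U \<in> CU"
    assume nos: "\<not> (\<exists>V1 V2. V1 \<union> V2 = U \<and> V1 \<inter> V2 = {} \<and> (\<exists>W\<subseteq>V1. W \<in> CV) \<and> (\<exists>W\<subseteq>V2. W \<in> CV))"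
    have cU: "countable U" and AU: "A U" and PU: "\<forall>W\<in>U. P W" using U unfolding CU_def by blast+
    have cov: "is_cover X U" and om': "\<And>F. finite F \<Longrightarrow> F \<subseteq> X \<Longrightarrow> \<exists>W\<in>U. F \<subseteq> W" using Aom[OF AU] by blast+
    have om: "infinite {W\<in>U. F \<subseteq> W}" if "finite F" "F \<subseteq> X" for F
      by (rule omega_inf[OF cov om' that])
    have ns: False if "V1 \<subseteq> U" "large_cover X V1" "large_cover X (U - V1)" for V1
    proof -
      have B1: "B V1" by (rule LB[OF AU that(1,2)])
      have B2: "B (U - V1)" by (rule LB[OF AU _ that(3)]) blast
      have c1: "countable V1" by (rule countable_subset[OF that(1) cU])
      have c2: "countable (U - V1)" by (rule countable_subset[OF _ cU]) blast
      have p1: "\<forall>W\<in>V1. P W" using PU that(1) by blast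
      have p2: "\<forall>W\<in>U - V1. P W" using PU by blast
      have i1: "V1 \<in> CV" unfolding CV_def using B1 c1 p1 by blast
      have i2: "U - V1 \<in> CV" unfolding CV_def using B2 c2 p2 by blast
      have "\<exists>V1' V2. V1' \<union> V2 = U \<and> V1' \<inter> V2 = {} \<and> (\<exists>W\<subseteq>V1'. W \<in> CV) \<and> (\<exists>W\<subseteq>V2. W \<in> CV)"
      proof (intro exI conjI)
        show "V1 \<union> (U - V1) = U" using that(1) by blast
        show "V1 \<inter> (U - V1) = {}" by blast
        show "V1 \<subseteq> V1" "U - V1 \<subseteq> U - V1" by (rule subset_refl)+
      qed (rule i1, rule i2)
      with nos show False by (rule notE)
    qed
    have "infinite U" using om[of "{}"] by simp
    then have bij: "bij_betw (from_nat_into U) UNIV U" using bij_betw_from_nat_into[OF cU] by blast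
    define e where "e = from_nat_into U"
    have bij': "bij_betw e UNIV U" using bij unfolding e_def .
    have X0: "X \<noteq> {}" using Xinf by auto
    note nb = nonsplit_base[OF X0 bij' cov om ns]
    have eU: "e n \<in> U" for n using bij' unfolding bij_betw_def by blast
    have "M (\<lambda>x. {n. x \<in> e n})"
    proof (rule h2)
      show "P (e n)" for n using PU eU by blast
      show "e n \<subseteq> X" for n using cov eU unfolding is_cover_def by blast
      show "\<forall>x\<in>X. infinite {n. x \<in> e n}" by (rule nb(2))
    qed
    moreover have "Q ((\<lambda>x. {n. x \<in> e n}) ` X)" by (rule bwd[OF AU bij' nb(1)])
    ultimately show False using spec[OF H, of "\<lambda>x. {n. x \<in> e n}"] by simp
  qed
qed



lemma fwd_omega:
  assumes "is_cover X V" "\<And>F. finite F \<Longrightarrow> F \<subseteq> X \<Longrightarrow> \<exists>W\<in>V. F \<subseteq> W"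
  shows "omega_cover X V"
  unfolding omega_cover_def using assms by blast

lemma Aom_omega: "omega_cover X U \<Longrightarrow> is_cover X U \<and> (\<forall>F. finite F \<and> F \<subseteq> X \<longrightarrow> (\<exists>W\<in>U. F \<subseteq> W))"
  unfolding omega_cover_def by blast

lemma fwd_tau:
  assumes q: "simple_P_point_base (f ` X)" and cov: "is_cover X V"
    and om: "\<And>F. finite F \<Longrightarrow> F \<subseteq> X \<Longrightarrow> \<exists>W\<in>V. F \<subseteq> W"
    and lin: "\<And>x y. x \<in> X \<Longrightarrow> y \<in> X \<Longrightarrow> (\<forall>a\<in>f ` X. \<forall>b\<in>f ` X. a \<subseteq>\<^sup>* b \<or> b \<subseteq>\<^sup>* a) \<Longrightarrow>
              finite {W\<in>V. x \<in> W \<and> y \<notin> W} \<or> finite {W\<in>V. y \<in> W \<and> x \<notin> W}"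
  shows "tau_cover X V"
proof -
  have l: "\<forall>a\<in>f ` X. \<forall>b\<in>f ` X. a \<subseteq>\<^sup>* b \<or> b \<subseteq>\<^sup>* a" using q unfolding simple_P_point_base_def by (rule conjunct2)
  have "\<forall>x\<in>X. infinite {W\<in>V. x \<in> W}"
  proof
    fix x assume x: "x \<in> X"
    have "infinite {W\<in>V. {x} \<subseteq> W}" by (rule omega_inf[OF cov om]) (use x in simp_all)
    then show "infinite {W\<in>V. x \<in> W}" by simp
  qed
  then have lg: "large_cover X V" by (rule large_of[OF subset_refl cov])
  have "\<forall>x\<in>X. \<forall>y\<in>X. finite {W\<in>V. x \<in> W \<and> y \<notin> W} \<or> finite {W\<in>V. y \<in> W \<and> x \<notin> W}"
  proof (intro ballI)
    fix x y assume "x \<in> X" "y \<in> X"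
    then show "finite {W\<in>V. x \<in> W \<and> y \<notin> W} \<or> finite {W\<in>V. y \<in> W \<and> x \<notin> W}" using l by (rule lin)
  qed
  with lg show ?thesis unfolding tau_cover_def by (rule conjI)
qed

lemma Aom_tau:
  assumes "tau_cover X U" "X \<noteq> {}"
  shows "is_cover X U \<and> (\<forall>F. finite F \<and> F \<subseteq> X \<longrightarrow> (\<exists>W\<in>U. F \<subseteq> W))"
proof
  show "is_cover X U" using assms(1) unfolding tau_cover_def large_cover_def by simp
  show "\<forall>F. finite F \<and> F \<subseteq> X \<longrightarrow> (\<exists>W\<in>U. F \<subseteq> W)"
  proof (intro allI impI)
    fix F assume "finite F \<and> F \<subseteq> X"
    then show "\<exists>W\<in>U. F \<subseteq> W" using tau_omega[OF assms] by blast
  qed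
qed

lemma bwd_tau:
  assumes tau: "tau_cover X U" and bij: "bij_betw e UNIV U" and b: "ultrafilter_base ((\<lambda>x. {n. x \<in> e n}) ` X)"
  shows "simple_P_point_base ((\<lambda>x. {n. x \<in> e n}) ` X)"
  unfolding simple_P_point_base_def
proof (rule conjI[OF b])
  show "\<forall>a\<in>(\<lambda>x. {n. x \<in> e n}) ` X. \<forall>b\<in>(\<lambda>x. {n. x \<in> e n}) ` X. a \<subseteq>\<^sup>* b \<or> b \<subseteq>\<^sup>* a"
  proof (intro ballI)
    fix a b assume "a \<in> (\<lambda>x. {n. x \<in> e n}) ` X" "b \<in> (\<lambda>x. {n. x \<in> e n}) ` X"
    then obtain x y where xy: "x \<in> X" "y \<in> X" "a = {n. x \<in> e n}" "b = {n. y \<in> e n}" by blast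
    show "a \<subseteq>\<^sup>* b \<or> b \<subseteq>\<^sup>* a" unfolding xy(3,4) by (rule tau_linear[OF bij tau xy(1,2)])
  qed
qed

lemma h2_cont:
  assumes "\<And>n. clopen_in X (e n)" "\<And>n. e n \<subseteq> X" "\<forall>x\<in>X. infinite {n. x \<in> e n}"
  shows "continuous_to_inf X (\<lambda>x. {n. x \<in> e n})"
  unfolding continuous_to_inf_def using assms(3) clopen_cont[OF assms(1,2)] by simp

lemma h2_borel:
  assumes "\<And>n. borel_in X (e n)" "\<And>n. e n \<subseteq> X" "\<forall>x\<in>X. infinite {n. x \<in> e n}"
  shows "borel_to_inf X (\<lambda>x. {n. x \<in> e n})"
  unfolding borel_to_inf_def using assms(3) sets_borel_meas[OF assms(1,2)] by simp

theorem theorem3p5: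
  fixes X :: "real set"
  assumes "infinite X"
  shows "(Split (C_Omega X) (C_Lambda X) \<longleftrightarrow>
            (\<forall>f. continuous_to_inf X f \<longrightarrow> \<not> ultrafilter_base (f ` X)))
       \<and> (Split (B_Omega X) (B_Lambda X) \<longleftrightarrow>
            (\<forall>f. borel_to_inf X f \<longrightarrow> \<not> ultrafilter_base (f ` X)))
       \<and> (Split (C_Tau X) (C_Tau X) \<longleftrightarrow>
            (\<forall>f. continuous_to_inf X f \<longrightarrow> \<not> simple_P_point_base (f ` X)))
       \<and> (Split (B_Tau X) (B_Tau X) \<longleftrightarrow>
            (\<forall>f. borel_to_inf X f \<longrightarrow> \<not> simple_P_point_base (f ` X)))"
proof -
  have X0: "X \<noteq> {}" using assms by auto
  have hc0: "\<And>f. continuous_to_inf X f \<Longrightarrow> \<forall>x\<in>X. infinite (f x)" unfolding continuous_to_inf_def by blast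
  have hb0: "\<And>f. borel_to_inf X f \<Longrightarrow> \<forall>x\<in>X. infinite (f x)" unfolding borel_to_inf_def by blast
  show ?thesis
  proof (intro conjI)
    show "Split (C_Omega X) (C_Lambda X) \<longleftrightarrow> (\<forall>f. continuous_to_inf X f \<longrightarrow> \<not> ultrafilter_base (f ` X))"
      by (rule part_gen[where P="clopen_in X" and A="omega_cover X" and B="large_cover X"],
          rule assms, erule hc0, erule cont_clopen, rule h2_cont, assumption+,
          rule C_Omega_def, rule C_Lambda_def, rule fwd_omega, assumption+, erule Aom_omega, assumption+)
    show "Split (B_Omega X) (B_Lambda X) \<longleftrightarrow> (\<forall>f. borel_to_inf X f \<longrightarrow> \<not> ultrafilter_base (f ` X))"
      by (rule part_gen[where P="borel_in X" and A="omega_cover X" and B="large_cover X"],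
          rule assms, erule hb0, erule borel_sets, rule h2_borel, assumption+,
          rule B_Omega_def, rule B_Lambda_def, rule fwd_omega, assumption+, erule Aom_omega, assumption+)
    show "Split (C_Tau X) (C_Tau X) \<longleftrightarrow> (\<forall>f. continuous_to_inf X f \<longrightarrow> \<not> simple_P_point_base (f ` X))"
      by (rule part_gen[where P="clopen_in X" and A="tau_cover X" and B="tau_cover X"],
          rule assms, erule hc0, erule cont_clopen, rule h2_cont, assumption+,
          rule C_Tau_def, rule C_Tau_def, rule fwd_tau, assumption+,
          simp add: simple_P_point_base_def, simp add: tau_cover_def, rule Aom_tau, assumption, rule X0,
          erule tau_sub, assumption+, erule bwd_tau, assumption+)
    show "Split (B_Tau X) (B_Tau X) \<longleftrightarrow> (\<forall>f. borel_to_inf X f \<longrightarrow> \<not> simple_P_point_base (f ` X))"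
      by (rule part_gen[where P="borel_in X" and A="tau_cover X" and B="tau_cover X"],
          rule assms, erule hb0, erule borel_sets, rule h2_borel, assumption+,
          rule B_Tau_def, rule B_Tau_def, rule fwd_tau, assumption+,
          simp add: simple_P_point_base_def, simp add: tau_cover_def, rule Aom_tau, assumption, rule X0,
          erule tau_sub, assumption+, erule bwd_tau, assumption+)
  qed
qed

end
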